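(* Let $G=(V,E)$ be a weighted strongly connected directed graph on $N$ vertices with edge weights $w_{uv}\ge 0$, and let $S_0\subseteq V$ be the initial set of mutants. If $G$ is a uniform circulation, i.e. there exists $m>0$ such that $\sum_{v\in V}w_{uv}=\sum_{v\in V}w_{vu}=m$ for all $u\in V$, then $\mathsf{fp}_{r=1}^{\delta}(G,S_0)=|S_0|/N$ for every $\delta\in[0,1]$.
   Context: Mixed $\delta$-updating on a weighted directed graph $G=(V,E)$ with $N$ vertices and weights $w_{uv}\ge 0$ ($u\to v\in E$ iff $w_{uv}>0$; self-loops allowed): each vertex holds a mutant (fitness $r>0$) or wild-type (fitness $1$); $f_S(u)\in\{1,r\}$ is the fitness at $u$ when $S$ is the mutant set. At each step, with probability $\delta$ a death-Birth step: choose $v\in V$ uniformly to die, then choose $u$ with probability proportional to $f_S(u)\,w_{uv}$, and $u$ copies its type onto $v$; with probability $1-\delta$ a Birth-death step: choose $u$ with probability proportional to $f_S(u)$, then choose $v$ with probability proportional to $w_{uv}$, and $u$ copies its type onto $v$. $\mathsf{fp}_r^\delta(G,S_0)$ is the probability that all vertices eventually become mutant starting from mutant set $S_0$. *)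

theory Defs
  imports "HOL-Analysis.Analysis"
begin

text \<open>Weighted directed graph: finite vertex set V, weights w u v \<ge> 0 (edge u\<rightarrow>v iff w u v > 0).
  States of the process are mutant sets S \<subseteq> V.\<close>

definition fitness :: "real \<Rightarrow> 'a set \<Rightarrow> 'a \<Rightarrow> real" where
  "fitness r S u = (if u \<in> S then r else 1)"

definition edge_rel :: "'a set \<Rightarrow> ('a \<Rightarrow> 'a \<Rightarrow> real) \<Rightarrow> ('a \<times> 'a) set" where
  "edge_rel V w = {(u, v). u \<in> V \<and> v \<in> V \<and> w u v > 0}"

definition strongly_connected :: "'a set \<Rightarrow> ('a \<Rightarrow> 'a \<Rightarrow> real) \<Rightarrow> bool" where
  "strongly_connected V w \<longleftrightarrow> (\<forall>u\<in>V. \<forall>v\<in>V. (u, v) \<in> (edge_rel V w)\<^sup>*)"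

definition uniform_circulation :: "'a set \<Rightarrow> ('a \<Rightarrow> 'a \<Rightarrow> real) \<Rightarrow> bool" where
  "uniform_circulation V w \<longleftrightarrow>
     (\<exists>m>0. \<forall>u\<in>V. (\<Sum>v\<in>V. w u v) = m \<and> (\<Sum>v\<in>V. w v u) = m)"

text \<open>Result of u copying its type onto v.\<close>
definition upd :: "'a set \<Rightarrow> 'a \<Rightarrow> 'a \<Rightarrow> 'a set" where
  "upd S u v = (if u \<in> S then insert v S else S - {v})"

text \<open>Probability that in one step of mixed \<delta>-updating the reproducing vertex is u and
  the replaced vertex is v.\<close>
definition pair_prob :: "'a set \<Rightarrow> ('a \<Rightarrow> 'a \<Rightarrow> real) \<Rightarrow> real \<Rightarrow> real \<Rightarrow> 'a set \<Rightarrow> 'a \<Rightarrow> 'a \<Rightarrow> real" where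
  "pair_prob V w r \<delta> S u v =
     \<delta> * (1 / real (card V)) * (fitness r S u * w u v / (\<Sum>x\<in>V. fitness r S x * w x v))
   + (1 - \<delta>) * (fitness r S u / (\<Sum>x\<in>V. fitness r S x)) * (w u v / (\<Sum>y\<in>V. w u y))"

definition trans_prob :: "'a set \<Rightarrow> ('a \<Rightarrow> 'a \<Rightarrow> real) \<Rightarrow> real \<Rightarrow> real \<Rightarrow> 'a set \<Rightarrow> 'a set \<Rightarrow> real" where
  "trans_prob V w r \<delta> S S' =
     (\<Sum>u\<in>V. \<Sum>v\<in>V. if upd S u v = S' then pair_prob V w r \<delta> S u v else 0)"

text \<open>fix_within n S: probability that starting from S all vertices are mutant after n steps
  (V is absorbing, so this is the probability of fixation within n steps).\<close>
fun fix_within :: "'a set \<Rightarrow> ('a \<Rightarrow> 'a \<Rightarrow> real) \<Rightarrow> real \<Rightarrow> real \<Rightarrow> nat \<Rightarrow> 'a set \<Rightarrow> real" where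
  "fix_within V w r \<delta> 0 S = (if S = V then 1 else 0)"
| "fix_within V w r \<delta> (Suc n) S =
     (\<Sum>S'\<in>Pow V. trans_prob V w r \<delta> S S' * fix_within V w r \<delta> n S')"

definition fp :: "'a set \<Rightarrow> ('a \<Rightarrow> 'a \<Rightarrow> real) \<Rightarrow> real \<Rightarrow> real \<Rightarrow> 'a set \<Rightarrow> real" where
  "fp V w r \<delta> S0 = lim (\<lambda>n. fix_within V w r \<delta> n S0)"

end

theory Submission
  imports Defs
begin

fun Pn :: "'a set \<Rightarrow> ('a \<Rightarrow> 'a \<Rightarrow> real) \<Rightarrow> real \<Rightarrow> nat \<Rightarrow> ('a set \<Rightarrow> real) \<Rightarrow> 'a set \<Rightarrow> real" where
  "Pn V w \<delta> 0 g S = g S"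
| "Pn V w \<delta> (Suc n) g S = (\<Sum>S'\<in>Pow V. trans_prob V w 1 \<delta> S S' * Pn V w \<delta> n g S')"

lemma Pn_add: "Pn V w \<delta> (n + k) g S = Pn V w \<delta> n (Pn V w \<delta> k g) S"
  by (induction n arbitrary: S) auto

lemma fix_Pn: "fix_within V w 1 \<delta> n S = Pn V w \<delta> n (\<lambda>S. if S = V then 1 else 0) S"
  by (induction n arbitrary: S) auto

lemma escape: "(a, b) \<in> R\<^sup>* \<Longrightarrow> a \<in> S \<Longrightarrow> b \<notin> S \<Longrightarrow> \<exists>u v. (u, v) \<in> R \<and> u \<in> S \<and> v \<notin> S"
  by (induction rule: rtrancl_induct) auto

locale circ =
  fixes V :: "'a set" and w :: "'a \<Rightarrow> 'a \<Rightarrow> real" and \<delta> :: real and m :: real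
  assumes fin: "finite V" and ne: "V \<noteq> {}" and nn: "\<forall>u v. w u v \<ge> 0" and mpos: "m > 0"
    and row: "\<forall>u\<in>V. (\<Sum>v\<in>V. w u v) = m" and col: "\<forall>u\<in>V. (\<Sum>v\<in>V. w v u) = m"
begin

lemma cardpos: "real (card V) > 0"
  using fin ne by (simp add: card_gt_0_iff)

lemma pp: assumes "u \<in> V" "v \<in> V"
  shows "pair_prob V w 1 \<delta> S u v = w u v / (real (card V) * m)"
proof -
  have a: "(\<Sum>x\<in>V. fitness 1 S x * w x v) = m" using col assms by (simp add: fitness_def)
  have b: "(\<Sum>x\<in>V. fitness 1 S x) = real (card V)" by (simp add: fitness_def)
  have c: "(\<Sum>y\<in>V. w u y) = m" using row assms by simp
  show ?thesis unfolding pair_prob_def a b c using mpos cardpos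
    by (simp add: fitness_def field_simps)
qed

lemma upd_sub: "S \<subseteq> V \<Longrightarrow> v \<in> V \<Longrightarrow> upd S u v \<subseteq> V"
  by (auto simp: upd_def)

lemma step: assumes "S \<subseteq> V"
  shows "(\<Sum>S'\<in>Pow V. trans_prob V w 1 \<delta> S S' * f S')
       = (\<Sum>u\<in>V. \<Sum>v\<in>V. w u v / (real (card V) * m) * f (upd S u v))"
proof -
  have "(\<Sum>S'\<in>Pow V. trans_prob V w 1 \<delta> S S' * f S')
      = (\<Sum>S'\<in>Pow V. \<Sum>u\<in>V. \<Sum>v\<in>V. (if upd S u v = S' then pair_prob V w 1 \<delta> S u v * f S' else 0))"
    unfolding trans_prob_def sum_distrib_right by (intro sum.cong refl) simp
  also have "\<dots> = (\<Sum>u\<in>V. \<Sum>v\<in>V. \<Sum>S'\<in>Pow V. (if upd S u v = S' then pair_prob V w 1 \<delta> S u v * f S' else 0))"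
    by (simp add: sum.swap[of _ "Pow V"] sum.swap[of _ "Pow V" V])
  also have "\<dots> = (\<Sum>u\<in>V. \<Sum>v\<in>V. pair_prob V w 1 \<delta> S u v * f (upd S u v))"
    using fin upd_sub[OF assms] by (intro sum.cong refl) (simp add: sum.delta)
  also have "\<dots> = (\<Sum>u\<in>V. \<Sum>v\<in>V. w u v / (real (card V) * m) * f (upd S u v))"
    by (intro sum.cong refl) (simp add: pp)
  finally show ?thesis .
qed

lemma tot: "(\<Sum>u\<in>V. \<Sum>v\<in>V. w u v / (real (card V) * m)) = 1"
proof -
  have "(\<Sum>u\<in>V. \<Sum>v\<in>V. w u v / (real (card V) * m)) = (\<Sum>u\<in>V. m / (real (card V) * m))"
    using row by (intro sum.cong refl) (simp add: sum_divide_distrib[symmetric])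
  also have "\<dots> = 1" using mpos cardpos by simp
  finally show ?thesis .
qed

abbreviation "c \<equiv> 1 / (real (card V) * m)"

lemma wc: "w u v / (real (card V) * m) \<ge> 0"
  using nn mpos cardpos by simp

lemma expand: "S \<subseteq> V \<Longrightarrow> Pn V w \<delta> (Suc n) g S
   = (\<Sum>u\<in>V. \<Sum>v\<in>V. w u v / (real (card V) * m) * Pn V w \<delta> n g (upd S u v))"
  using step by simp

lemma Pn_mono: "\<forall>S\<in>Pow V. g S \<le> h S \<Longrightarrow> S \<subseteq> V \<Longrightarrow> Pn V w \<delta> n g S \<le> Pn V w \<delta> n h S"
proof (induction n arbitrary: S)
  case 0 then show ?case by simp
next
  case (Suc n)
  show ?case unfolding expand[OF Suc.prems(2)]
    by (intro sum_mono mult_left_mono wc Suc.IH Suc.prems(1)) (use upd_sub Suc.prems in auto)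
qed

lemma Pn_lin: "S \<subseteq> V \<Longrightarrow> Pn V w \<delta> n (\<lambda>S. a * g S + b) S = a * Pn V w \<delta> n g S + b"
proof (induction n arbitrary: S)
  case 0 then show ?case by simp
next
  case (Suc n)
  have "Pn V w \<delta> (Suc n) (\<lambda>S. a * g S + b) S
     = (\<Sum>u\<in>V. \<Sum>v\<in>V. w u v / (real (card V) * m) * (a * Pn V w \<delta> n g (upd S u v) + b))"
    unfolding expand[OF Suc.prems] using Suc upd_sub by (intro sum.cong refl) auto
  also have "\<dots> = a * (\<Sum>u\<in>V. \<Sum>v\<in>V. w u v / (real (card V) * m) * Pn V w \<delta> n g (upd S u v))
       + b * (\<Sum>u\<in>V. \<Sum>v\<in>V. w u v / (real (card V) * m))"
    by (simp add: sum_distrib_left sum.distrib algebra_simps)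
  also have "\<dots> = a * Pn V w \<delta> (Suc n) g S + b"
    unfolding expand[OF Suc.prems] tot by simp
  finally show ?case .
qed

lemma Pn_plus: "S \<subseteq> V \<Longrightarrow> Pn V w \<delta> n (\<lambda>S. g S + h S) S = Pn V w \<delta> n g S + Pn V w \<delta> n h S"
proof (induction n arbitrary: S)
  case 0 then show ?case by simp
next
  case (Suc n)
  have "Pn V w \<delta> (Suc n) (\<lambda>S. g S + h S) S
     = (\<Sum>u\<in>V. \<Sum>v\<in>V. w u v / (real (card V) * m) * (Pn V w \<delta> n g (upd S u v) + Pn V w \<delta> n h (upd S u v)))"
    unfolding expand[OF Suc.prems] using Suc upd_sub by (intro sum.cong refl) auto
  also have "\<dots> = Pn V w \<delta> (Suc n) g S + Pn V w \<delta> (Suc n) h S"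
    unfolding expand[OF Suc.prems] by (simp add: sum_distrib_left sum.distrib algebra_simps)
  finally show ?case .
qed

lemma Pn_cong: "\<forall>S\<in>Pow V. g S = h S \<Longrightarrow> S \<subseteq> V \<Longrightarrow> Pn V w \<delta> n g S = Pn V w \<delta> n h S"
  using Pn_mono[of g h S n] Pn_mono[of h g S n] by force

lemma Pn_const: "S \<subseteq> V \<Longrightarrow> Pn V w \<delta> n (\<lambda>_. b) S = b"
  using Pn_lin[of S n 0 "\<lambda>_. 0" b] by simp

lemma Pn_nonneg: "\<forall>S\<in>Pow V. g S \<ge> 0 \<Longrightarrow> S \<subseteq> V \<Longrightarrow> Pn V w \<delta> n g S \<ge> 0"
  using Pn_mono[of "\<lambda>_. 0" g S n] Pn_const[of S n 0] by simp

lemma Pn_fix: "S \<subseteq> V \<Longrightarrow> \<forall>u\<in>V. \<forall>v\<in>V. upd S u v = S \<Longrightarrow> Pn V w \<delta> n g S = g S"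
proof (induction n)
  case 0 then show ?case by simp
next
  case (Suc n)
  have "Pn V w \<delta> (Suc n) g S = (\<Sum>u\<in>V. \<Sum>v\<in>V. w u v / (real (card V) * m) * g S)"
    unfolding expand[OF Suc.prems(1)] using Suc by (intro sum.cong refl) auto
  also have "\<dots> = (\<Sum>u\<in>V. \<Sum>v\<in>V. w u v / (real (card V) * m)) * g S"
    by (simp add: sum_distrib_right)
  also have "\<dots> = g S" using tot by simp
  finally show ?case .
qed

lemma upd_V: "\<forall>u\<in>V. \<forall>v\<in>V. upd V u v = V"
  by (auto simp: upd_def)

lemma upd_empty: "\<forall>u\<in>V. \<forall>v\<in>V. upd {} u v = {}"
  by (auto simp: upd_def)

lemma card_upd: assumes "S \<subseteq> V" "v \<in> V"
  shows "real (card (upd S u v)) = real (card S) + (if u \<in> S then 1 else 0) - (if v \<in> S then 1 else 0)"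
proof -
  have fS: "finite S" using finite_subset[OF assms(1) fin] .
  show ?thesis
  proof (cases "u \<in> S")
    case True
    then have "upd S u v = insert v S" by (simp add: upd_def)
    then show ?thesis using fS True by (simp add: card_insert_if)
  next
    case False
    then have e: "upd S u v = S - {v}" by (simp add: upd_def)
    show ?thesis
    proof (cases "v \<in> S")
      case True
      then have "card S \<ge> 1" using fS by (metis One_nat_def Suc_leI card_gt_0_iff empty_iff)
      then show ?thesis using False True e by (simp add: card_Diff_singleton_if of_nat_diff)
    next
      case F2: False
      then show ?thesis using False e by simp
    qed
  qed
qed

lemma mart_sum: assumes "S \<subseteq> V"
  shows "(\<Sum>u\<in>V. \<Sum>v\<in>V. w u v / (real (card V) * m) * real (card (upd S u v))) = real (card S)"
proof -
  have r1: "(\<Sum>u\<in>V. \<Sum>v\<in>V. w u v * (if u \<in> S then 1 else 0)) = m * real (card S)"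
  proof -
    have "(\<Sum>u\<in>V. \<Sum>v\<in>V. w u v * (if u \<in> S then 1 else 0)) = (\<Sum>u\<in>V. if u \<in> S then m else 0)"
      using row by (intro sum.cong refl) (auto simp: sum_distrib_right[symmetric])
    also have "\<dots> = (\<Sum>u\<in>S. m)" using assms fin by (simp add: sum.If_cases Int_absorb1)
    finally show ?thesis by simp
  qed
  have r2: "(\<Sum>u\<in>V. \<Sum>v\<in>V. w u v * (if v \<in> S then 1 else 0)) = m * real (card S)"
  proof -
    have "(\<Sum>u\<in>V. \<Sum>v\<in>V. w u v * (if v \<in> S then 1 else 0)) = (\<Sum>v\<in>V. \<Sum>u\<in>V. w u v * (if v \<in> S then 1 else 0))"
      by (rule sum.swap)
    also have "\<dots> = (\<Sum>v\<in>V. if v \<in> S then m else 0)"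
      using col by (intro sum.cong refl) (auto simp: sum_distrib_right[symmetric])
    also have "\<dots> = (\<Sum>u\<in>S. m)" using assms fin by (simp add: sum.If_cases Int_absorb1)
    finally show ?thesis by simp
  qed
  have r3: "(\<Sum>u\<in>V. \<Sum>v\<in>V. w u v * real (card S)) = (\<Sum>u\<in>V. \<Sum>v\<in>V. w u v) * real (card S)"
    by (simp only: sum_distrib_right)
  have r0: "(\<Sum>u\<in>V. \<Sum>v\<in>V. w u v) = real (card V) * m" using row by simp
  have "(\<Sum>u\<in>V. \<Sum>v\<in>V. w u v / (real (card V) * m) * real (card (upd S u v)))
      = (\<Sum>u\<in>V. \<Sum>v\<in>V. c * (w u v * real (card S) + w u v * (if u \<in> S then 1 else 0)
           - w u v * (if v \<in> S then 1 else 0)))"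
    by (intro sum.cong refl, subst card_upd[OF assms(1)]) (simp_all add: right_diff_distrib distrib_left)
  also have "\<dots> = c * (\<Sum>u\<in>V. \<Sum>v\<in>V. (w u v * real (card S) + w u v * (if u \<in> S then 1 else 0)
           - w u v * (if v \<in> S then 1 else 0)))"
    by (simp only: sum_distrib_left)
  also have "\<dots> = c * ((\<Sum>u\<in>V. \<Sum>v\<in>V. w u v * real (card S)) + (\<Sum>u\<in>V. \<Sum>v\<in>V. w u v * (if u \<in> S then 1 else 0))
           - (\<Sum>u\<in>V. \<Sum>v\<in>V. w u v * (if v \<in> S then 1 else 0)))"
    by (simp only: sum.distrib sum_subtractf)
  also have "\<dots> = real (card S)" unfolding r3 r0 r1 r2 using mpos cardpos by simp
  finally show ?thesis .
qed

lemma Pn_card: "S \<subseteq> V \<Longrightarrow> Pn V w \<delta> n (\<lambda>S. real (card S)) S = real (card S)"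
proof (induction n arbitrary: S)
  case 0 then show ?case by simp
next
  case (Suc n)
  have "Pn V w \<delta> (Suc n) (\<lambda>S. real (card S)) S
     = (\<Sum>u\<in>V. \<Sum>v\<in>V. w u v / (real (card V) * m) * real (card (upd S u v)))"
    unfolding expand[OF Suc.prems] using Suc.IH upd_sub Suc.prems by (intro sum.cong refl) simp
  then show ?case using mart_sum[OF Suc.prems] by (rule trans)
qed

abbreviation "Fv \<equiv> (\<lambda>S. if S = V then (1::real) else 0)"

lemma Pn_Fv_nonneg: "S \<subseteq> V \<Longrightarrow> Pn V w \<delta> n Fv S \<ge> 0"
  by (rule Pn_nonneg) auto

lemma Pn_Fv_mono: assumes "S \<subseteq> V" shows "Pn V w \<delta> n Fv S \<le> Pn V w \<delta> (n + k) Fv S"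
  using assms
proof (induction k arbitrary: S)
  case 0 then show ?case by simp
next
  case (Suc k)
  have one: "\<forall>S\<in>Pow V. Fv S \<le> Pn V w \<delta> 1 Fv S"
  proof
    fix S assume "S \<in> Pow V"
    then show "Fv S \<le> Pn V w \<delta> 1 Fv S"
      using Pn_fix[of V 1 Fv] upd_V Pn_Fv_nonneg[of S 1] by auto
  qed
  have e: "Pn V w \<delta> (n + Suc k) Fv S = Pn V w \<delta> (n + k) (Pn V w \<delta> 1 Fv) S"
    using Pn_add[of V w \<delta> "n + k" 1 Fv S] by simp
  have "Pn V w \<delta> (n + k) (Pn V w \<delta> 1 Fv) S \<ge> Pn V w \<delta> (n + k) Fv S" by (rule Pn_mono[OF one Suc.prems])
  then show ?case using Suc.IH[OF Suc.prems] e by linarith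
qed

lemma reach: assumes sc: "strongly_connected V w"
  shows "S \<subseteq> V \<Longrightarrow> S \<noteq> {} \<Longrightarrow> Pn V w \<delta> (card (V - S)) Fv S > 0"
proof (induction "card (V - S)" arbitrary: S)
  case 0
  then have "V - S = {}" using fin by simp
  then have "S = V" using 0 by blast
  then show ?case by simp
next
  case (Suc k S)
  then have "V - S \<noteq> {}" by auto
  then obtain b where b: "b \<in> V" "b \<notin> S" by blast
  obtain a where a: "a \<in> S" using Suc.prems by blast
  have "(a, b) \<in> (edge_rel V w)\<^sup>*" using sc a b Suc.prems unfolding strongly_connected_def by blast
  then obtain u v where uv: "(u, v) \<in> edge_rel V w" "u \<in> S" "v \<notin> S" using escape a b by metis
  then have uvV: "u \<in> V" "v \<in> V" "w u v > 0" by (auto simp: edge_rel_def)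
  have up: "upd S u v = insert v S" using uv by (simp add: upd_def)
  have k: "k = card (V - insert v S)"
  proof -
    have "V - insert v S = (V - S) - {v}" by blast
    then show ?thesis using Suc.hyps(2) uv uvV fin by simp
  qed
  have pos: "Pn V w \<delta> k Fv (insert v S) > 0"
    using Suc.hyps(1)[OF k] Suc.prems uvV k[symmetric] by auto
  have nnt: "\<And>x y. x \<in> V \<Longrightarrow> y \<in> V \<Longrightarrow> 0 \<le> w x y / (real (card V) * m) * Pn V w \<delta> k Fv (upd S x y)"
    using wc Pn_Fv_nonneg upd_sub Suc.prems by (meson mult_nonneg_nonneg)
  have "0 < w u v / (real (card V) * m) * Pn V w \<delta> k Fv (upd S u v)"
    using uvV pos up mpos cardpos by simp
  also have "\<dots> \<le> (\<Sum>y\<in>V. w u y / (real (card V) * m) * Pn V w \<delta> k Fv (upd S u y))"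
    by (rule member_le_sum) (use uvV nnt fin in auto)
  also have "\<dots> \<le> (\<Sum>x\<in>V. \<Sum>y\<in>V. w x y / (real (card V) * m) * Pn V w \<delta> k Fv (upd S x y))"
    by (rule member_le_sum) (use uvV nnt fin in \<open>auto intro: sum_nonneg\<close>)
  also have "\<dots> = Pn V w \<delta> (Suc k) Fv S" using expand[OF Suc.prems(1)] by simp
  finally show ?case using Suc.hyps(2) by simp
qed

abbreviation "Av \<equiv> (\<lambda>S. if S = V \<or> S = {} then (0::real) else 1)"

lemma Av_dec: assumes "S \<subseteq> V" shows "Pn V w \<delta> (n + k) Av S \<le> Pn V w \<delta> n Av S"
  using assms
proof (induction k arbitrary: S)
  case 0 then show ?case by simp
next
  case (Suc k)
  have one: "\<forall>S\<in>Pow V. Pn V w \<delta> 1 Av S \<le> Av S"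
  proof
    fix S assume S: "S \<in> Pow V"
    show "Pn V w \<delta> 1 Av S \<le> Av S"
    proof (cases "S = V \<or> S = {}")
      case True
      then show ?thesis using Pn_fix[of V 1 Av] Pn_fix[of "{}" 1 Av] upd_V upd_empty by auto
    next
      case False
      have "Pn V w \<delta> 1 Av S \<le> Pn V w \<delta> 1 (\<lambda>_. 1) S" using S by (intro Pn_mono) auto
      then show ?thesis using Pn_const[of S 1 1] S False by simp
    qed
  qed
  have e: "Pn V w \<delta> (n + Suc k) Av S = Pn V w \<delta> (n + k) (Pn V w \<delta> 1 Av) S"
    using Pn_add[of V w \<delta> "n + k" 1 Av S] by simp
  have "Pn V w \<delta> (n + k) (Pn V w \<delta> 1 Av) S \<le> Pn V w \<delta> (n + k) Av S" by (rule Pn_mono[OF one Suc.prems])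
  then show ?case using Suc.IH[OF Suc.prems] e by linarith
qed

lemma conv: assumes sc: "strongly_connected V w" and S0: "S0 \<subseteq> V"
  shows "(\<lambda>n. Pn V w \<delta> n Fv S0) \<longlonglongrightarrow> real (card S0) / real (card V)"
proof -
  define N where "N = card V"
  define E where "E = (\<lambda>S. Pn V w \<delta> N Fv S) ` {S. S \<subseteq> V \<and> S \<noteq> {}}"
  define \<epsilon> where "\<epsilon> = Min E"
  have finE: "finite E" unfolding E_def using fin by simp
  have VE: "1 \<in> E" unfolding E_def using ne Pn_fix[of V N Fv] upd_V
    by (auto intro!: image_eqI[where x=V])
  have posE: "\<forall>x\<in>E. x > 0"
  proof
    fix x assume "x \<in> E"
    then obtain S where S: "S \<subseteq> V" "S \<noteq> {}" "x = Pn V w \<delta> N Fv S" unfolding E_def by blast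
    have le: "card (V - S) \<le> N" unfolding N_def using fin by (simp add: card_mono)
    have "0 < Pn V w \<delta> (card (V - S)) Fv S" using reach[OF sc S(1,2)] .
    also have "\<dots> \<le> Pn V w \<delta> (card (V - S) + (N - card (V - S))) Fv S" by (rule Pn_Fv_mono[OF S(1)])
    finally show "x > 0" using S le by simp
  qed
  have epos: "\<epsilon> > 0" unfolding \<epsilon>_def using finE VE posE by (metis Min_in empty_iff)
  have ele1: "\<epsilon> \<le> 1" unfolding \<epsilon>_def using finE VE by simp
  have eleS: "\<epsilon> \<le> Pn V w \<delta> N Fv S" if "S \<subseteq> V" "S \<noteq> {}" for S
    unfolding \<epsilon>_def E_def using finE that unfolding E_def by (intro Min_le) auto
  have decay1: "\<forall>S\<in>Pow V. Pn V w \<delta> N Av S \<le> (1 - \<epsilon>) * Av S"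
  proof
    fix S assume S: "S \<in> Pow V"
    show "Pn V w \<delta> N Av S \<le> (1 - \<epsilon>) * Av S"
    proof (cases "S = V \<or> S = {}")
      case True
      then show ?thesis using Pn_fix[of V N Av] Pn_fix[of "{}" N Av] upd_V upd_empty by auto
    next
      case False
      have "Pn V w \<delta> N Av S \<le> Pn V w \<delta> N (\<lambda>S. (-1) * Fv S + 1) S" using S by (intro Pn_mono) auto
      also have "\<dots> = - Pn V w \<delta> N Fv S + 1" using Pn_lin[of S N "-1" Fv 1] S by simp
      finally show ?thesis using eleS[of S] S False by simp
    qed
  qed
  have decayk: "\<forall>S\<in>Pow V. Pn V w \<delta> (k * N) Av S \<le> (1 - \<epsilon>) ^ k" for k
  proof (induction k)
    case 0 then show ?case by simp
  next
    case (Suc k)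
    show ?case
    proof
      fix S assume S: "S \<in> Pow V"
      have "Pn V w \<delta> (Suc k * N) Av S = Pn V w \<delta> (k * N) (Pn V w \<delta> N Av) S"
        using Pn_add[of V w \<delta> "k * N" N Av S] by (simp add: add.commute)
      also have "\<dots> \<le> Pn V w \<delta> (k * N) (\<lambda>S. (1 - \<epsilon>) * Av S + 0) S"
        using decay1 S by (intro Pn_mono) auto
      also have "\<dots> = (1 - \<epsilon>) * Pn V w \<delta> (k * N) Av S" using Pn_lin[of S "k * N" "1 - \<epsilon>" Av 0] S by simp
      also have "\<dots> \<le> (1 - \<epsilon>) * (1 - \<epsilon>) ^ k" using Suc S ele1 by (intro mult_left_mono) auto
      finally show "Pn V w \<delta> (Suc k * N) Av S \<le> (1 - \<epsilon>) ^ Suc k" by simp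
    qed
  qed
  define hN where "hN = (\<lambda>S::'a set. real (card S) / real N)"
  have Ph: "Pn V w \<delta> n hN S0 = hN S0" for n
  proof -
    have "Pn V w \<delta> n hN S0 = Pn V w \<delta> n (\<lambda>S. (1 / real N) * real (card S) + 0) S0"
      using S0 unfolding hN_def by (intro Pn_cong) auto
    also have "\<dots> = hN S0" using Pn_lin[OF S0, of n "1 / real N" "\<lambda>S. real (card S)" 0] Pn_card[OF S0]
      unfolding hN_def by simp
    finally show ?thesis .
  qed
  have Npos: "real N > 0" unfolding N_def using cardpos .
  have lo: "Pn V w \<delta> n Fv S0 \<le> hN S0" for n
  proof -
    have "Pn V w \<delta> n Fv S0 \<le> Pn V w \<delta> n hN S0"
      using S0 Npos unfolding hN_def N_def by (intro Pn_mono) auto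
    then show ?thesis using Ph by simp
  qed
  have hi: "hN S0 \<le> Pn V w \<delta> n Fv S0 + Pn V w \<delta> n Av S0" for n
  proof -
    have "\<forall>S\<in>Pow V. hN S \<le> Fv S + Av S"
    proof
      fix S assume S: "S \<in> Pow V"
      have "card S \<le> N" unfolding N_def using S fin by (simp add: card_mono)
      then have "hN S \<le> 1" unfolding hN_def using Npos by simp
      then show "hN S \<le> Fv S + Av S" unfolding hN_def N_def using cardpos by auto
    qed
    then have "Pn V w \<delta> n hN S0 \<le> Pn V w \<delta> n (\<lambda>S. Fv S + Av S) S0" using S0 by (intro Pn_mono) auto
    then show ?thesis using Ph Pn_plus[OF S0, of n Fv Av] by simp
  qed
  have "(\<lambda>n. Pn V w \<delta> n Fv S0) \<longlonglongrightarrow> hN S0"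
  proof (rule LIMSEQ_I)
    fix e :: real assume e: "0 < e"
    obtain k where k: "(1 - \<epsilon>) ^ k < e" using real_arch_pow_inv[OF e, of "1 - \<epsilon>"] epos by auto
    show "\<exists>no. \<forall>n\<ge>no. norm (Pn V w \<delta> n Fv S0 - hN S0) < e"
    proof (intro exI allI impI)
      fix n assume n: "n \<ge> k * N"
      have "Pn V w \<delta> n Av S0 = Pn V w \<delta> (k * N + (n - k * N)) Av S0" using n by simp
      also have "\<dots> \<le> Pn V w \<delta> (k * N) Av S0" by (rule Av_dec[OF S0])
      also have "\<dots> \<le> (1 - \<epsilon>) ^ k" using decayk S0 by auto
      finally have "Pn V w \<delta> n Av S0 < e" using k by simp
      then show "norm (Pn V w \<delta> n Fv S0 - hN S0) < e" using lo[of n] hi[of n] by simp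
    qed
  qed
  then show ?thesis unfolding hN_def N_def .
qed

end

theorem mainTheorem2:
  fixes V :: "'a set" and w :: "'a \<Rightarrow> 'a \<Rightarrow> real" and S0 :: "'a set" and \<delta> :: real
  assumes "finite V" and "V \<noteq> {}"
    and "\<forall>u v. w u v \<ge> 0"
    and "strongly_connected V w"
    and "uniform_circulation V w"
    and "S0 \<subseteq> V"
    and "0 \<le> \<delta>" and "\<delta> \<le> 1"
  shows "fp V w 1 \<delta> S0 = real (card S0) / real (card V)"
proof -
  obtain m where m: "m > 0" "\<forall>u\<in>V. (\<Sum>v\<in>V. w u v) = m \<and> (\<Sum>v\<in>V. w v u) = m"
    using assms(5) unfolding uniform_circulation_def by blast
  interpret circ V w \<delta> m
    using assms(1,2,3) m by unfold_locales auto
  have "(\<lambda>n. fix_within V w 1 \<delta> n S0) \<longlonglongrightarrow> real (card S0) / real (card V)"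
    unfolding fix_Pn using conv[OF assms(4,6)] .
  then show ?thesis unfolding fp_def by (rule limI)
qed

end
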